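(* Let $m\ge0$ and let $f:\mathbb{R}^n\to\mathbb{R}$ be $m$-weakly convex and $L$-Lipschitz continuous with $f^\star:=\inf_xf(x)>-\infty$. Run the proximal descent method (defined in the context) with $\beta\in(0,1)$, $\rho>0$, $\alpha=m+\rho$, from $x_1\in\mathbb{R}^n$. Let $\eta>0$, $\epsilon>0$, and let $k^\star$ be the smallest index such that $x_{k^\star}$ is an $(\eta,\epsilon)$-inexact stationary point. Then $k^\star\le K_{\max}(\eta,\epsilon)+1$ and the total number of function and subgradient evaluations performed before reaching $x_{k^\star}$ satisfies $$\sum_{i=1}^{k^\star-1}T_i\le\frac{8K_{\max}(\eta,\epsilon)}{(1-\beta)^2\rho}\Big(1+\frac m\rho\Big)^2L^2\max\Big\{\frac{2\rho}{\eta^2},\frac1\epsilon\Big\},$$ where $K_{\max}(\eta,\epsilon)=\Big\lceil\frac{2\alpha^2(f(x_1)-f^\star)}{m+\beta\rho}\frac1{\eta^2}+\frac{(1-\beta)(f(x_1)-f^\star)}{\beta}\frac1\epsilon+1\Big\rceil$.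
   Context: A function $f$ is $m$-weakly convex ($m\ge 0$) if $x\mapsto f(x)+\frac{m}{2}\|x\|^2$ is convex; its subdifferential is $\partial f(x)=\{v: f(y)\ge f(x)+\langle v,y-x\rangle-\frac{m}{2}\|y-x\|^2\ \forall y\}$, and for $\epsilon\ge0$, $\partial_\epsilon f(x)=\{v: f(y)\ge f(x)+\langle v,y-x\rangle-\frac{m}{2}\|y-x\|^2-\epsilon\ \forall y\}$. A point $x$ is an $(\eta,\epsilon)$-inexact stationary point if $\mathrm{dist}(0,\partial_\epsilon f(x))\le\eta$. Subroutine ProxDescent$(x_k,\beta,\rho)$: set $j=1$, choose $g_1\in\partial f(x_k)$, let $\tilde f_1(x)=f(x_k)+\langle g_1,x-x_k\rangle$, and compute $z_2=\arg\min_x\{\tilde f_1(x)+\frac\rho2\|x-x_k\|^2\}$. While $f(x_k)-\big(f(z_{j+1})+\frac m2\|z_{j+1}-x_k\|^2\big)<\beta\big(f(x_k)-\tilde f_j(z_{j+1})\big)$: choose $g_{j+1}$ with $g_{j+1}-m(z_{j+1}-x_k)\in\partial f(z_{j+1})$ and a convex $\tilde f_{j+1}:\mathbb{R}^n\to\mathbb{R}$ such that for all $x$: (i) $\tilde f_{j+1}(x)\le f(x)+\frac m2\|x-x_k\|^2$; (ii) $\tilde f_{j+1}(x)\ge\tilde f_j(z_{j+1})+\langle s_{j+1},x-z_{j+1}\rangle$ with $s_{j+1}=\rho(x_k-z_{j+1})$; (iii) $\tilde f_{j+1}(x)\ge f(z_{j+1})+\frac m2\|z_{j+1}-x_k\|^2+\langle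 g_{j+1},x-z_{j+1}\rangle$; compute $z_{j+2}=\arg\min_x\{\tilde f_{j+1}(x)+\frac\rho2\|x-x_k\|^2\}$ and increase $j$ by one. On exit, return $z_{j+1}$. $T_k$ denotes the number of trial points $z_2,\dots,z_{T_k+1}$ computed in the call. The proximal descent method: given $x_1\in\mathbb{R}^n$, set $x_{k+1}=$ ProxDescent$(x_k,\beta,\rho)$ for $k=1,2,\dots$; each trial point costs one function value and one subgradient evaluation, so $\sum_i T_i$ counts evaluations. *)

theory Defs
  imports "HOL-Analysis.Analysis"
begin

definition wsubdiff :: "real \<Rightarrow> ('a::euclidean_space \<Rightarrow> real) \<Rightarrow> 'a \<Rightarrow> 'a set" where
  "wsubdiff m f x = {v. \<forall>y. f y \<ge> f x + inner v (y - x) - m / 2 * norm (y - x) ^ 2}"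

definition esubdiff :: "real \<Rightarrow> real \<Rightarrow> ('a::euclidean_space \<Rightarrow> real) \<Rightarrow> 'a \<Rightarrow> 'a set" where
  "esubdiff m eps f x = {v. \<forall>y. f y \<ge> f x + inner v (y - x) - m / 2 * norm (y - x) ^ 2 - eps}"

text \<open>(eta,eps)-inexact stationary point: dist(0, esubdiff) \<le> eta
  (distance to the empty set is +infinity, hence the nonemptiness requirement).\<close>
definition inexact_stationary :: "real \<Rightarrow> ('a::euclidean_space \<Rightarrow> real) \<Rightarrow> real \<Rightarrow> real \<Rightarrow> 'a \<Rightarrow> bool" where
  "inexact_stationary m f eta eps x \<longleftrightarrow>
     esubdiff m eps f x \<noteq> {} \<and> infdist 0 (esubdiff m eps f x) \<le> eta"

definition weakly_convex :: "real \<Rightarrow> ('a::euclidean_space \<Rightarrow> real) \<Rightarrow> bool" where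
  "weakly_convex m f \<longleftrightarrow> m \<ge> 0 \<and> convex_on UNIV (\<lambda>x. f x + m / 2 * norm x ^ 2)"

definition prox_min :: "real \<Rightarrow> 'a::euclidean_space \<Rightarrow> ('a \<Rightarrow> real) \<Rightarrow> 'a \<Rightarrow> bool" where
  "prox_min rho x h z \<longleftrightarrow> (\<forall>u. h z + rho / 2 * norm (z - x) ^ 2 \<le> h u + rho / 2 * norm (u - x) ^ 2)"

text \<open>The while-condition of ProxDescent evaluated at iteration j (trial point z (j+1)).\<close>
definition loop_test :: "real \<Rightarrow> real \<Rightarrow> ('a::euclidean_space \<Rightarrow> real) \<Rightarrow> 'a
    \<Rightarrow> (nat \<Rightarrow> 'a \<Rightarrow> real) \<Rightarrow> (nat \<Rightarrow> 'a) \<Rightarrow> nat \<Rightarrow> bool" where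
  "loop_test m beta f x ft z j \<longleftrightarrow>
     f x - (f (z (Suc j)) + m / 2 * norm (z (Suc j) - x) ^ 2) < beta * (f x - ft j (z (Suc j)))"

text \<open>A (possibly non-terminating) execution of ProxDescent(x, beta, rho):
  g j are the chosen subgradients, ft j the models, z (j+1) the trial points.
  Constraints are imposed only as long as the loop has not exited.\<close>
definition prox_descent_run :: "real \<Rightarrow> real \<Rightarrow> real \<Rightarrow> ('a::euclidean_space \<Rightarrow> real) \<Rightarrow> 'a
    \<Rightarrow> (nat \<Rightarrow> 'a) \<Rightarrow> (nat \<Rightarrow> 'a \<Rightarrow> real) \<Rightarrow> (nat \<Rightarrow> 'a) \<Rightarrow> bool" where
  "prox_descent_run m beta rho f x g ft z \<longleftrightarrow>
     g 1 \<in> wsubdiff m f x \<and>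
     ft 1 = (\<lambda>u. f x + inner (g 1) (u - x)) \<and>
     (\<forall>j\<ge>1. (\<forall>i\<in>{1..<j}. loop_test m beta f x ft z i) \<longrightarrow> prox_min rho x (ft j) (z (Suc j))) \<and>
     (\<forall>j\<ge>1. (\<forall>i\<in>{1..j}. loop_test m beta f x ft z i) \<longrightarrow>
        g (Suc j) - m *\<^sub>R (z (Suc j) - x) \<in> wsubdiff m f (z (Suc j)) \<and>
        convex_on UNIV (ft (Suc j)) \<and>
        (\<forall>u. ft (Suc j) u \<le> f u + m / 2 * norm (u - x) ^ 2) \<and>
        (\<forall>u. ft (Suc j) u \<ge> ft j (z (Suc j)) + inner (rho *\<^sub>R (x - z (Suc j))) (u - z (Suc j))) \<and>
        (\<forall>u. ft (Suc j) u \<ge> f (z (Suc j)) + m / 2 * norm (z (Suc j) - x) ^ 2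
                             + inner (g (Suc j)) (u - z (Suc j))))"

definition prox_terminates :: "real \<Rightarrow> real \<Rightarrow> ('a::euclidean_space \<Rightarrow> real) \<Rightarrow> 'a
    \<Rightarrow> (nat \<Rightarrow> 'a \<Rightarrow> real) \<Rightarrow> (nat \<Rightarrow> 'a) \<Rightarrow> bool" where
  "prox_terminates m beta f x ft z \<longleftrightarrow> (\<exists>j\<ge>1. \<not> loop_test m beta f x ft z j)"

text \<open>T = number of trial points z 2, ..., z (T+1) computed; the call returns z (T+1).\<close>
definition num_trials :: "real \<Rightarrow> real \<Rightarrow> ('a::euclidean_space \<Rightarrow> real) \<Rightarrow> 'a
    \<Rightarrow> (nat \<Rightarrow> 'a \<Rightarrow> real) \<Rightarrow> (nat \<Rightarrow> 'a) \<Rightarrow> nat" where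
  "num_trials m beta f x ft z = (LEAST j. j \<ge> 1 \<and> \<not> loop_test m beta f x ft z j)"

definition Kmax :: "real \<Rightarrow> real \<Rightarrow> real \<Rightarrow> real \<Rightarrow> real \<Rightarrow> real \<Rightarrow> int" where
  "Kmax m beta rho gap eta eps =
     \<lceil>2 * (m + rho) ^ 2 * gap / (m + beta * rho) * (1 / eta ^ 2)
       + (1 - beta) * gap / beta * (1 / eps) + 1\<rceil>"

end

theory Submission
  imports Defs
begin

lemma eps_lemma:
  fixes A B C :: real
  assumes h: "\<And>t. 0 < t \<Longrightarrow> t \<le> 1 \<Longrightarrow> A \<ge> B - t * C" and C: "C \<ge> 0"
  shows "A \<ge> B"
proof (rule ccontr)
  assume "\<not> A \<ge> B"
  hence d: "B - A > 0" by simp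
  define t where "t = min 1 ((B - A) / (C + 1))"
  have t0: "t > 0" using d C by (simp add: t_def)
  have t1: "t \<le> 1" by (simp add: t_def)
  have "t * C \<le> (B - A) / (C + 1) * C"
    using C by (intro mult_right_mono) (auto simp: t_def)
  also have "\<dots> < B - A" using d C by (simp add: field_simps)
  finally have "t * C < B - A" .
  with h[OF t0 t1] show False by simp
qed

lemma norm_sq_add: "norm (a + b) ^ 2 = norm a ^ 2 + 2 * inner a b + norm (b::'a::real_inner) ^ 2"
  by (simp add: power2_norm_eq_inner inner_add_left inner_add_right inner_commute)

lemma sub_prox:
  fixes h :: "'a::euclidean_space \<Rightarrow> real"
  assumes cv: "convex_on UNIV h" and pm: "prox_min rho x h z" and rho: "rho > 0"
  shows "h u \<ge> h z + inner (rho *\<^sub>R (x - z)) (u - z)"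
proof -
  have "h u - h z \<ge> rho * inner (x - z) (u - z) - t * (rho / 2 * norm (u - z) ^ 2)"
    if t: "0 < t" "t \<le> 1" for t
  proof -
    define ut where "ut = (1 - t) *\<^sub>R z + t *\<^sub>R u"
    have c1: "h ut \<le> (1 - t) * h z + t * h u"
      unfolding ut_def using convex_onD[OF cv, of t z u] t by simp
    have c2: "h z + rho / 2 * norm (z - x) ^ 2 \<le> h ut + rho / 2 * norm (ut - x) ^ 2"
      using pm unfolding prox_min_def by blast
    have e: "ut - x = (z - x) + t *\<^sub>R (u - z)" unfolding ut_def by (simp add: algebra_simps)
    have e2: "norm (ut - x) ^ 2 = norm (z - x) ^ 2 + 2 * t * inner (z - x) (u - z) + t^2 * norm (u - z) ^ 2"
      unfolding e norm_sq_add by (simp add: power_mult_distrib)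
    have "t * (h u - h z) \<ge> t * (rho * inner (x - z) (u - z) - t * (rho / 2 * norm (u - z) ^ 2))"
    proof -
      have "inner (x - z) (u - z) = - inner (z - x) (u - z)"
        by (simp add: inner_diff_left)
      have e3: "rho / 2 * norm (ut - x) ^ 2 = rho / 2 * norm (z - x) ^ 2 - t * (rho * inner (x - z) (u - z)) + t * (t * (rho / 2 * norm (u - z) ^ 2))"
        unfolding e2 using \<open>inner (x - z) (u - z) = _\<close> by (simp add: algebra_simps power2_eq_square)
      have c1': "h ut \<le> h z - t * h z + t * h u" using c1 by (simp add: left_diff_distrib)
      have "t * h u - t * h z \<ge> t * (rho * inner (x - z) (u - z)) - t * (t * (rho / 2 * norm (u - z) ^ 2))"
        using c1' c2 e3 by linarith
      then show ?thesis by (simp add: right_diff_distrib)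
    qed
    then show ?thesis using t by simp
  qed
  note H = this
  have C0: "rho / 2 * norm (u - z) ^ 2 \<ge> 0" using rho by simp
  have "h u - h z \<ge> rho * inner (x - z) (u - z)" by (rule eps_lemma[OF H C0])
  then show ?thesis by simp
qed


lemma lip_bound:
  fixes f :: "'a::euclidean_space \<Rightarrow> real"
  assumes lip: "lipschitz_on L UNIV f" and v: "v \<in> wsubdiff m f z" and m: "m \<ge> 0"
  shows "norm v \<le> L"
proof (cases "v = 0")
  case True
  then show ?thesis using lip by (simp add: lipschitz_on_def)
next
  case False
  hence nv: "norm v > 0" by simp
  have vv: "inner v v = norm v * norm v" by (simp add: power2_norm_eq_inner[symmetric] power2_eq_square)
  have "norm v - t * (m / 2 * norm v) \<le> L" if t: "0 < t" "t \<le> 1" for t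
  proof -
    have "f (z + t *\<^sub>R v) \<ge> f z + inner v (t *\<^sub>R v) - m / 2 * norm (t *\<^sub>R v) ^ 2"
      using v unfolding wsubdiff_def by (metis (mono_tags, lifting) add_diff_cancel_left' mem_Collect_eq)
    hence a: "f (z + t *\<^sub>R v) \<ge> f z + t * norm v ^ 2 - t * (t * (m / 2 * norm v ^ 2))"
      using t vv by (simp add: power_mult_distrib power2_eq_square algebra_simps)
    have "dist (f (z + t *\<^sub>R v)) (f z) \<le> L * dist (z + t *\<^sub>R v) z"
      using lip unfolding lipschitz_on_def by blast
    hence b: "f (z + t *\<^sub>R v) - f z \<le> L * (t * norm v)"
      using t by (simp add: dist_norm abs_le_iff)
    have "t * (norm v * (norm v - t * (m / 2 * norm v))) \<le> t * (norm v * L)"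
      using a b by (simp add: algebra_simps power2_eq_square)
    hence "norm v * (norm v - t * (m / 2 * norm v)) \<le> norm v * L" using t by simp
    thus ?thesis using nv by simp
  qed
  moreover have "m / 2 * norm v \<ge> 0" using m by simp
  ultimately have "L \<ge> norm v" by (rule eps_lemma)
  thus ?thesis by simp
qed

lemma sq_compl:
  fixes d h :: "'a::real_inner"
  assumes rho: "rho > 0"
  shows "rho / 2 * norm d ^ 2 + lam * inner h d \<ge> - (lam ^ 2 * norm h ^ 2 / (2 * rho))"
proof -
  have "0 \<le> norm (rho *\<^sub>R d + lam *\<^sub>R h) ^ 2" by simp
  also have "\<dots> = rho^2 * norm d ^ 2 + 2 * rho * lam * inner h d + lam^2 * norm h ^ 2"
    unfolding norm_sq_add by (simp add: power_mult_distrib inner_commute algebra_simps)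
  finally have "0 \<le> (rho^2 * norm d ^ 2 + 2 * rho * lam * inner h d + lam^2 * norm h ^ 2) / (2 * rho)"
    using rho by simp
  also have "\<dots> = rho / 2 * norm d ^ 2 + lam * inner h d + lam ^ 2 * norm h ^ 2 / (2 * rho)"
    using rho by (simp add: field_simps power2_eq_square)
  finally show ?thesis by simp
qed

lemma stat_lemma:
  assumes "v \<in> esubdiff m e f x" "e \<le> eps" "norm v \<le> eta"
  shows "inexact_stationary m f eta eps x"
proof -
  have "v \<in> esubdiff m eps f x" using assms(1,2) unfolding esubdiff_def
    by (smt (verit, best) mem_Collect_eq)
  moreover have "infdist 0 (esubdiff m eps f x) \<le> dist 0 v" by (rule infdist_le[OF calculation])
  ultimately show ?thesis using assms(3) unfolding inexact_stationary_def by auto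
qed


locale pdctx =
  fixes m beta rho L eta eps :: real
    and f :: "'a::euclidean_space \<Rightarrow> real"
    and x :: 'a and g :: "nat \<Rightarrow> 'a" and ft :: "nat \<Rightarrow> 'a \<Rightarrow> real" and z :: "nat \<Rightarrow> 'a"
  assumes m0: "m \<ge> 0" and lip: "lipschitz_on L UNIV f"
    and b0: "0 < beta" and b1: "beta < 1" and rho0: "rho > 0" and eta0: "eta > 0" and eps0: "eps > 0"
    and run: "prox_descent_run m beta rho f x g ft z"
begin

definition Fm where "Fm u = f u + m / 2 * norm (u - x) ^ 2"
definition Dl where "Dl j = f x - (ft j (z (Suc j)) + rho / 2 * norm (z (Suc j) - x) ^ 2)"
definition cont where "cont j \<longleftrightarrow> (\<forall>i\<in>{1..<j}. loop_test m beta f x ft z i)"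

lemma L0: "L \<ge> 0" using lip by (simp add: lipschitz_on_def)

lemma cont_mono: "cont (Suc j) \<Longrightarrow> cont j"
  unfolding cont_def by auto

lemma cont_Suc: "cont (Suc j) \<Longrightarrow> j \<ge> 1 \<Longrightarrow> loop_test m beta f x ft z j"
  unfolding cont_def by auto

lemma model:
  assumes j: "j \<ge> 1" and c: "cont j"
  shows "convex_on UNIV (ft j) \<and> (\<forall>u. ft j u \<le> Fm u) \<and> prox_min rho x (ft j) (z (Suc j))"
proof -
  have pm: "prox_min rho x (ft j) (z (Suc j))"
    using run j c unfolding prox_descent_run_def cont_def by blast
  show ?thesis
  proof (cases "j = 1")
    case True
    have ft1: "ft 1 = (\<lambda>u. f x + inner (g 1) (u - x))" and g1: "g 1 \<in> wsubdiff m f x"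
      using run unfolding prox_descent_run_def by auto
    have "convex_on UNIV (ft 1)"
      unfolding ft1 by (rule convex_onI) (auto simp: inner_add_right inner_diff_right algebra_simps)
    moreover have "\<forall>u. ft 1 u \<le> Fm u"
      using g1 unfolding ft1 Fm_def wsubdiff_def by (auto simp: algebra_simps)
    ultimately show ?thesis using pm True by simp
  next
    case False
    then obtain i where i: "j = Suc i" "i \<ge> 1" using j by (cases j) auto
    have "\<forall>k\<in>{1..i}. loop_test m beta f x ft z k" using c unfolding cont_def i by auto
    hence "convex_on UNIV (ft (Suc i)) \<and> (\<forall>u. ft (Suc i) u \<le> f u + m / 2 * norm (u - x) ^ 2)"
      using run i(2) unfolding prox_descent_run_def by blast
    thus ?thesis using pm i by (simp add: Fm_def)
  qed
qed

lemma basic_a: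
  assumes "j \<ge> 1" "cont j"
  shows "ft j u \<ge> ft j (z (Suc j)) + inner (rho *\<^sub>R (x - z (Suc j))) (u - z (Suc j))"
  using sub_prox[of "ft j" rho x "z (Suc j)" u] model[OF assms] rho0 by blast

lemma basic_b:
  assumes "j \<ge> 1" "cont j"
  shows "f x - ft j (z (Suc j)) \<ge> rho * norm (z (Suc j) - x) ^ 2"
    and "rho / 2 * norm (z (Suc j) - x) ^ 2 \<le> Dl j"
proof -
  let ?z = "z (Suc j)"
  have a: "ft j x \<ge> ft j ?z + inner (rho *\<^sub>R (x - ?z)) (x - ?z)" by (rule basic_a[OF assms])
  have "ft j x \<le> Fm x" using model[OF assms] by blast
  hence "ft j x \<le> f x" by (simp add: Fm_def)
  moreover have "inner (rho *\<^sub>R (x - ?z)) (x - ?z) = rho * norm (?z - x) ^ 2"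
    by (simp add: power2_norm_eq_inner norm_minus_commute[of ?z x])
  ultimately show 1: "f x - ft j ?z \<ge> rho * norm (?z - x) ^ 2" using a by linarith
  thus "rho / 2 * norm (?z - x) ^ 2 \<le> Dl j" unfolding Dl_def by simp
qed

lemma basic_c:
  assumes j: "j \<ge> 1" "cont j" and d1: "Dl j \<le> eps" and d2: "2 * rho * Dl j \<le> eta ^ 2"
  shows "inexact_stationary m f eta eps x"
proof -
  let ?z = "z (Suc j)"
  let ?s = "rho *\<^sub>R (x - ?z)"
  let ?e = "Dl j - rho / 2 * norm (?z - x) ^ 2"
  have ip: "inner ?s (x - ?z) = rho * norm (?z - x) ^ 2"
    by (simp add: power2_norm_eq_inner norm_minus_commute[of ?z x])
  have "?s \<in> esubdiff m ?e f x"
    unfolding esubdiff_def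
  proof (safe)
    fix u
    have a: "ft j u \<ge> ft j ?z + inner ?s (u - ?z)" by (rule basic_a[OF j])
    have b: "ft j u \<le> Fm u" using model[OF j] by blast
    have "inner ?s (u - ?z) = inner ?s (u - x) + inner ?s (x - ?z)"
      by (metis add_diff_eq diff_add_cancel inner_add_right)
    show "f u \<ge> f x + inner ?s (u - x) - m / 2 * norm (u - x) ^ 2 - ?e"
      using a b[unfolded Fm_def] ip \<open>inner ?s (u - ?z) = _\<close> unfolding Dl_def by linarith
  qed
  moreover have "?e \<le> eps"
  proof -
    have "rho / 2 * norm (?z - x) ^ 2 \<ge> 0" using rho0 by simp
    thus ?thesis using d1 by linarith
  qed
  moreover have "norm ?s \<le> eta"
  proof -
    have "norm ?s ^ 2 = rho * (2 * (rho / 2 * norm (?z - x) ^ 2))"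
      using rho0 by (simp add: norm_minus_commute[of ?z x] power_mult_distrib power2_eq_square)
    also have "\<dots> \<le> rho * (2 * Dl j)" using basic_b(2)[OF j] rho0 by simp
    also have "\<dots> \<le> eta ^ 2" using d2 by simp
    finally show ?thesis by (rule power2_le_imp_le) (use eta0 in linarith)
  qed
  ultimately show ?thesis by (rule stat_lemma)
qed

lemma run_step:
  assumes j: "j \<ge> 1" and c: "cont (Suc j)"
  shows "\<forall>u. ft (Suc j) u \<ge> ft j (z (Suc j)) + inner (rho *\<^sub>R (x - z (Suc j))) (u - z (Suc j))"
    and "\<forall>u. ft (Suc j) u \<ge> f (z (Suc j)) + m / 2 * norm (z (Suc j) - x) ^ 2
                             + inner (g (Suc j)) (u - z (Suc j))"
    and "g (Suc j) - m *\<^sub>R (z (Suc j) - x) \<in> wsubdiff m f (z (Suc j))"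
proof -
  have "\<forall>i\<in>{1..j}. loop_test m beta f x ft z i" using c unfolding cont_def by auto
  then show "\<forall>u. ft (Suc j) u \<ge> ft j (z (Suc j)) + inner (rho *\<^sub>R (x - z (Suc j))) (u - z (Suc j))"
    and "\<forall>u. ft (Suc j) u \<ge> f (z (Suc j)) + m / 2 * norm (z (Suc j) - x) ^ 2
                             + inner (g (Suc j)) (u - z (Suc j))"
    and "g (Suc j) - m *\<^sub>R (z (Suc j) - x) \<in> wsubdiff m f (z (Suc j))"
    using run j unfolding prox_descent_run_def by blast+
qed

lemma dec:
  assumes j: "j \<ge> 1" and c: "cont (Suc j)" and l0: "0 \<le> lam" and l1: "lam \<le> 1"
  shows "Dl (Suc j) \<le> Dl j - lam * ((1 - beta) * Dl j)
           + lam ^ 2 * norm (g (Suc j) - rho *\<^sub>R (x - z (Suc j))) ^ 2 / (2 * rho)"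
proof -
  define zj where "zj = z (Suc j)"
  define w where "w = z (Suc (Suc j))"
  define d where "d = w - zj"
  define s where "s = rho *\<^sub>R (x - zj)"
  define h where "h = g (Suc j) - s"
  define r where "r = norm (zj - x) ^ 2"
  define Q where "Q = rho / 2 * norm d ^ 2"
  define Th where "Th = ft j zj + rho / 2 * r"
  define Th' where "Th' = ft (Suc j) w + rho / 2 * norm (w - x) ^ 2"
  define Fz where "Fz = f zj + m / 2 * r"
  define ih where "ih = inner h d"
  have cj: "cont j" using cont_mono[OF c] .
  have R2: "ft (Suc j) w \<ge> ft j zj + inner s d" using run_step(1)[OF j c] unfolding zj_def s_def d_def w_def by blast
  have R3: "ft (Suc j) w \<ge> Fz + inner (g (Suc j)) d" using run_step(2)[OF j c] unfolding zj_def Fz_def r_def d_def w_def by blast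
  have LT: "f x - Fz < beta * (f x - ft j zj)"
    using cont_Suc[OF c j] unfolding loop_test_def Fz_def r_def zj_def by simp
  have nw: "norm (w - x) ^ 2 = norm d ^ 2 + 2 * inner d (zj - x) + r"
    unfolding r_def d_def by (metis diff_add_cancel add_diff_eq norm_sq_add)
  have isd: "inner s d = - (rho * inner d (zj - x))"
    unfolding s_def by (simp add: inner_commute inner_diff_left inner_diff_right algebra_simps)
  have ihe: "ih = inner (g (Suc j)) d + rho * inner d (zj - x)"
    unfolding ih_def h_def using isd by (simp add: inner_diff_left)
  have nw2: "rho / 2 * norm (w - x) ^ 2 = Q + rho * inner d (zj - x) + rho / 2 * r"
    unfolding nw Q_def by (simp add: algebra_simps)
  have T1: "Th' \<ge> Th + Q" unfolding Th'_def Th_def using R2 isd nw2 by linarith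
  have T2: "Th' \<ge> Fz + rho / 2 * r + ih + Q" unfolding Th'_def using R3 ihe nw2 by linarith
  have C1: "(1 - lam) * Th' \<ge> (1 - lam) * (Th + Q)" using T1 l1 by (intro mult_left_mono) auto
  have C2: "lam * Th' \<ge> lam * (Fz + rho / 2 * r + ih + Q)" using T2 l0 by (intro mult_left_mono) auto
  have C: "Th' \<ge> Th + lam * (Fz + rho / 2 * r - Th) + (Q + lam * ih)"
  proof -
    have "Th' = (1 - lam) * Th' + lam * Th'" by (simp add: algebra_simps)
    also have "\<dots> \<ge> (1 - lam) * (Th + Q) + lam * (Fz + rho / 2 * r + ih + Q)" using C1 C2 by linarith
    finally show ?thesis by (simp add: algebra_simps)
  qed
  have SQ: "Q + lam * ih \<ge> - (lam ^ 2 * norm h ^ 2 / (2 * rho))"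
    unfolding Q_def ih_def by (rule sq_compl[OF rho0])
  have del: "f x - ft j zj = Dl j + rho / 2 * r" unfolding Dl_def zj_def r_def by simp
  have r0: "rho / 2 * r \<ge> 0" using rho0 unfolding r_def by simp
  have G1: "Fz + rho / 2 * r - Th \<ge> (1 - beta) * (f x - ft j zj)"
  proof -
    have "(1 - beta) * (f x - ft j zj) = (f x - ft j zj) - beta * (f x - ft j zj)" by (simp add: algebra_simps)
    thus ?thesis using LT unfolding Th_def by linarith
  qed
  have G2: "(1 - beta) * (f x - ft j zj) \<ge> (1 - beta) * Dl j"
    using b1 del r0 by (intro mult_left_mono) auto
  have G3: "lam * (Fz + rho / 2 * r - Th) \<ge> lam * ((1 - beta) * Dl j)"
    using G1 G2 l0 by (intro mult_left_mono) auto
  have "Dl (Suc j) = f x - Th'" unfolding Dl_def Th'_def w_def by simp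
  moreover have "Dl j = f x - Th" unfolding Dl_def Th_def zj_def r_def by simp
  ultimately show ?thesis using C SQ G3 unfolding h_def s_def zj_def by linarith
qed

lemma hbound:
  assumes j: "j \<ge> 1" and c: "cont (Suc j)"
  shows "norm (g (Suc j) - rho *\<^sub>R (x - z (Suc j))) \<le> L + (m + rho) * norm (z (Suc j) - x)"
proof -
  let ?z = "z (Suc j)"
  have e: "g (Suc j) - rho *\<^sub>R (x - ?z) = (g (Suc j) - m *\<^sub>R (?z - x)) + (m + rho) *\<^sub>R (?z - x)"
    by (simp add: algebra_simps)
  have "norm (g (Suc j) - m *\<^sub>R (?z - x)) \<le> L"
    by (rule lip_bound[OF lip run_step(3)[OF j c] m0])
  moreover have "norm ((m + rho) *\<^sub>R (?z - x)) = (m + rho) * norm (?z - x)"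
    using m0 rho0 by simp
  moreover have "norm ((g (Suc j) - m *\<^sub>R (?z - x)) + (m + rho) *\<^sub>R (?z - x)) \<le> norm (g (Suc j) - m *\<^sub>R (?z - x)) + norm ((m + rho) *\<^sub>R (?z - x))"
    by (rule norm_triangle_ineq)
  ultimately show ?thesis unfolding e by linarith
qed

lemma D1bound: "Dl 1 \<le> L ^ 2 / (2 * rho)"
proof -
  have ft1: "ft 1 = (\<lambda>u. f x + inner (g 1) (u - x))" and g1: "g 1 \<in> wsubdiff m f x"
    using run unfolding prox_descent_run_def by auto
  have ng: "norm (g 1) \<le> L" by (rule lip_bound[OF lip g1 m0])
  have "rho / 2 * norm (z 2 - x) ^ 2 + 1 * inner (g 1) (z 2 - x) \<ge> - (1 ^ 2 * norm (g 1) ^ 2 / (2 * rho))"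
    by (rule sq_compl[OF rho0])
  moreover have "Dl 1 = - (rho / 2 * norm (z 2 - x) ^ 2 + 1 * inner (g 1) (z 2 - x))"
  proof -
    have s2: "Suc 1 = (2::nat)" by simp
    show ?thesis unfolding Dl_def ft1 s2 by simp
  qed
  ultimately have "Dl 1 \<le> norm (g 1) ^ 2 / (2 * rho)" by simp
  also have "\<dots> \<le> L ^ 2 / (2 * rho)"
    using ng rho0 by (intro divide_right_mono power_mono) auto
  finally show ?thesis .
qed

lemma Dl_nonneg: "j \<ge> 1 \<Longrightarrow> cont j \<Longrightarrow> Dl j \<ge> 0"
proof -
  assume a: "j \<ge> 1" "cont j"
  have "rho / 2 * norm (z (Suc j) - x) ^ 2 \<ge> 0" using rho0 by simp
  thus "Dl j \<ge> 0" using basic_b(2)[OF a] by linarith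
qed

lemma inv:
  assumes Lp: "L > 0"
  defines "G \<equiv> 2 * (m + rho) * L / rho"
  defines "c \<equiv> (1 - beta) ^ 2 * rho / (2 * G ^ 2)"
  shows "j \<ge> 1 \<Longrightarrow> cont j \<Longrightarrow> Dl j \<le> L ^ 2 / (2 * rho) \<and> c * real j * Dl j \<le> 1"
proof -
  have al: "m + rho \<ge> rho" using m0 by simp
  have qL: "(m + rho) * L / rho \<ge> L"
  proof -
    have "(m + rho) * L \<ge> rho * L" using al Lp by (intro mult_right_mono) auto
    thus ?thesis using rho0 by (simp add: field_simps)
  qed
  have GL: "G \<ge> 2 * L"
  proof -
    note qL
    moreover have "G = 2 * ((m + rho) * L / rho)" unfolding G_def by simp
    ultimately show ?thesis by linarith
  qed
  have Gp: "G > 0" using GL Lp by simp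
  have G2: "G ^ 2 \<ge> 4 * L ^ 2"
  proof -
    have "(2 * L) ^ 2 \<le> G ^ 2" using GL Lp by (intro power_mono) auto
    thus ?thesis by (simp add: power_mult_distrib)
  qed
  have c0: "c \<ge> 0" unfolding c_def using rho0 by simp
  have bb: "(1 - beta) ^ 2 \<le> 1" using b0 b1 by (simp add: power_le_one)
  have bb0: "(1 - beta) ^ 2 \<ge> 0" by simp
  show "j \<ge> 1 \<Longrightarrow> cont j \<Longrightarrow> Dl j \<le> L ^ 2 / (2 * rho) \<and> c * real j * Dl j \<le> 1"
  proof (induction j rule: nat_induct_at_least)
    case base
    have "c * Dl 1 \<le> c * (L ^ 2 / (2 * rho))" using D1bound c0 by (rule mult_left_mono)
    also have "\<dots> = (1 - beta) ^ 2 * L ^ 2 / (4 * G ^ 2)" unfolding c_def using rho0 Gp by (simp add: field_simps)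
    also have "\<dots> \<le> 1 * L ^ 2 / (4 * L ^ 2)"
      using bb G2 Lp Gp GL by (intro frac_le mult_right_mono) auto
    also have "\<dots> \<le> 1" using Lp by simp
    finally have "c * Dl 1 \<le> 1" .
    then show ?case using D1bound by simp
  next
    case (Suc n)
    have cn: "cont n" using cont_mono[OF Suc.prems] .
    from Suc.IH[OF cn] have IH1: "Dl n \<le> L ^ 2 / (2 * rho)" and IH2: "c * real n * Dl n \<le> 1" by auto
    define D where "D = Dl n"
    have D0: "D \<ge> 0" unfolding D_def using Dl_nonneg[OF Suc.hyps cn] .
    let ?z = "z (Suc n)"
    define nh where "nh = norm (g (Suc n) - rho *\<^sub>R (x - ?z))"
    have "norm (?z - x) ^ 2 \<le> (L / rho) ^ 2"
    proof -
      have "rho / 2 * norm (?z - x) ^ 2 \<le> L ^ 2 / (2 * rho)" using basic_b(2)[OF Suc.hyps cn] IH1 by linarith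
      thus ?thesis using rho0 by (simp add: field_simps power_divide power2_eq_square)
    qed
    hence nz: "norm (?z - x) \<le> L / rho" by (rule power2_le_imp_le) (use Lp rho0 in simp)
    have "nh \<le> L + (m + rho) * (L / rho)"
    proof -
      have "(m + rho) * norm (?z - x) \<le> (m + rho) * (L / rho)" using nz m0 rho0 by (intro mult_left_mono) auto
      thus ?thesis unfolding nh_def using hbound[OF Suc.hyps Suc.prems] by linarith
    qed
    also have "\<dots> \<le> G"
    proof -
      have "(m + rho) * (L / rho) = (m + rho) * L / rho" "G = 2 * ((m + rho) * L / rho)" unfolding G_def by simp_all
      thus ?thesis using qL by linarith
    qed
    finally have nhG: "nh \<le> G" .
    have nh2: "nh ^ 2 \<le> G ^ 2" using nhG by (intro power_mono) (auto simp: nh_def)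
    have A: "Dl (Suc n) \<le> D" using dec[OF Suc.hyps Suc.prems, of 0] unfolding D_def by simp
    define lam where "lam = (1 - beta) * D * rho / G ^ 2"
    have l0: "lam \<ge> 0" unfolding lam_def using b1 D0 rho0 by simp
    have l1: "lam \<le> 1"
    proof -
      have "(1 - beta) * D * rho \<le> 1 * (L ^ 2 / (2 * rho)) * rho"
        using b0 b1 D0 IH1 rho0 unfolding D_def by (intro mult_right_mono mult_mono) auto
      also have "\<dots> \<le> G ^ 2"
      proof -
        have "L ^ 2 \<ge> 0" by simp
        moreover have "1 * (L ^ 2 / (2 * rho)) * rho = L ^ 2 / 2" using rho0 by simp
        ultimately show ?thesis using G2 by linarith
      qed
      finally show ?thesis unfolding lam_def using Gp by simp
    qed
    have "Dl (Suc n) \<le> D - lam * ((1 - beta) * D) + lam ^ 2 * nh ^ 2 / (2 * rho)"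
      using dec[OF Suc.hyps Suc.prems l0 l1] unfolding D_def nh_def by simp
    also have "\<dots> \<le> D - lam * ((1 - beta) * D) + lam ^ 2 * G ^ 2 / (2 * rho)"
      using nh2 rho0 by (simp add: divide_right_mono mult_left_mono)
    also have "\<dots> = D - c * D ^ 2"
      unfolding lam_def c_def using Gp rho0 by (simp add: field_simps power2_eq_square)
    finally have B: "Dl (Suc n) \<le> D - c * D ^ 2" .
    define a where "a = c * D"
    have a0: "a \<ge> 0" unfolding a_def using c0 D0 by simp
    have na: "real n * a \<le> 1" using IH2 unfolding a_def D_def by (simp add: algebra_simps)
    have a1: "a \<le> 1"
    proof -
      have "1 * a \<le> real n * a" using Suc.hyps a0 by (intro mult_right_mono) auto
      thus ?thesis using na by simp
    qed
    have "c * real (Suc n) * Dl (Suc n) \<le> real (Suc n) * (a - a ^ 2)"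
    proof -
      have "c * Dl (Suc n) \<le> c * (D - c * D ^ 2)" using B c0 by (rule mult_left_mono)
      also have "\<dots> = a - a ^ 2" unfolding a_def by (simp add: power2_eq_square algebra_simps)
      finally have "c * Dl (Suc n) \<le> a - a ^ 2" .
      hence "real (Suc n) * (c * Dl (Suc n)) \<le> real (Suc n) * (a - a ^ 2)" by (intro mult_left_mono) auto
      thus ?thesis by (simp add: algebra_simps)
    qed
    also have "\<dots> = (real (Suc n) * a) * (1 - a)" by (simp add: power2_eq_square algebra_simps)
    also have "\<dots> \<le> (1 + a) * (1 - a)" using na a1 by (intro mult_right_mono) (auto simp: algebra_simps)
    also have "\<dots> \<le> 1" by (simp add: algebra_simps)
    finally show ?case using A IH1 unfolding D_def by simp
  qed
qed

lemma inner_term: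
  assumes ns: "\<not> inexact_stationary m f eta eps x"
  shows "prox_terminates m beta f x ft z \<and>
         real (num_trials m beta f x ft z)
           \<le> 8 / ((1 - beta) ^ 2 * rho) * (1 + m / rho) ^ 2 * L ^ 2 * max (2 * rho / eta ^ 2) (1 / eps)"
proof -
  define tau where "tau = min eps (eta ^ 2 / (2 * rho))"
  have tau0: "tau > 0" unfolding tau_def using eps0 eta0 rho0 by simp
  have key: "Dl j > tau" if "j \<ge> 1" "cont j" for j
  proof (rule ccontr)
    assume "\<not> Dl j > tau"
    hence d: "Dl j \<le> eps" "Dl j \<le> eta ^ 2 / (2 * rho)"
      unfolding tau_def by auto
    have "2 * rho * Dl j \<le> 2 * rho * (eta ^ 2 / (2 * rho))" using d(2) rho0 by (intro mult_left_mono) auto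
    hence "2 * rho * Dl j \<le> eta ^ 2" using rho0 by simp
    note d(1) this
    with basic_c[OF that] ns show False by blast
  qed
  have c1: "cont 1" unfolding cont_def by simp
  have Lp: "L > 0"
  proof (rule ccontr)
    assume "\<not> L > 0"
    hence "L = 0" using L0 by simp
    hence "Dl 1 \<le> 0" using D1bound by simp
    with key[OF _ c1] tau0 show False by simp
  qed
  define G where "G = 2 * (m + rho) * L / rho"
  define c where "c = (1 - beta) ^ 2 * rho / (2 * G ^ 2)"
  have Gp: "G > 0" unfolding G_def using Lp rho0 m0 by simp
  have cp: "c > 0" unfolding c_def using Gp rho0 b1 by simp
  define Bnd where "Bnd = 1 / (c * tau)"
  have bnd: "real j < Bnd" if "j \<ge> 1" "cont j" for j
  proof -
    have i: "c * real j * Dl j \<le> 1" using inv[OF Lp that] unfolding G_def c_def by blast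
    have "c * real j * tau < c * real j * Dl j"
      using key[OF that] cp that by (intro mult_strict_left_mono) auto
    hence "c * tau * real j < 1" using i by (simp add: algebra_simps)
    thus ?thesis unfolding Bnd_def using cp tau0 by (simp add: field_simps)
  qed
  have ex: "\<exists>j. j \<ge> 1 \<and> \<not> loop_test m beta f x ft z j"
  proof (rule ccontr)
    assume "\<not> ?thesis"
    hence all: "cont j" for j unfolding cont_def by auto
    define j where "j = nat \<lceil>Bnd\<rceil> + 1"
    have "real j > Bnd" unfolding j_def by linarith
    moreover have "j \<ge> 1" unfolding j_def by simp
    ultimately show False using bnd[OF _ all] by fastforce
  qed
  hence trm: "prox_terminates m beta f x ft z" unfolding prox_terminates_def by blast
  define T where "T = num_trials m beta f x ft z"
  have T: "T \<ge> 1 \<and> \<not> loop_test m beta f x ft z T"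
    unfolding T_def num_trials_def by (rule LeastI_ex[OF ex])
  have cT: "cont T" unfolding cont_def
  proof
    fix i assume i: "i \<in> {1..<T}"
    show "loop_test m beta f x ft z i"
    proof (rule ccontr)
      assume "\<not> loop_test m beta f x ft z i"
      hence "T \<le> i" unfolding T_def num_trials_def using i by (intro Least_le) auto
      with i show False by auto
    qed
  qed
  have "real T < Bnd" using bnd T cT by blast
  moreover have "Bnd = 8 / ((1 - beta) ^ 2 * rho) * (1 + m / rho) ^ 2 * L ^ 2 * max (2 * rho / eta ^ 2) (1 / eps)"
  proof -
    have it: "1 / tau = max (2 * rho / eta ^ 2) (1 / eps)"
      unfolding tau_def using eps0 eta0 rho0
      by (cases "eps \<le> eta ^ 2 / (2 * rho)") (auto simp: min_def max_def field_simps)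
    have "Bnd = (1 / c) * (1 / tau)" unfolding Bnd_def by simp
    also have "1 / c = 8 / ((1 - beta) ^ 2 * rho) * (1 + m / rho) ^ 2 * L ^ 2"
      unfolding c_def G_def using rho0 b1 by (simp add: field_simps power2_eq_square)
    finally show ?thesis using it by simp
  qed
  ultimately show ?thesis using trm unfolding T_def by simp
qed

lemma T_props:
  assumes trm: "prox_terminates m beta f x ft z"
  defines "T \<equiv> num_trials m beta f x ft z"
  shows "T \<ge> 1" "\<not> loop_test m beta f x ft z T" "cont T"
proof -
  have ex: "\<exists>j. j \<ge> 1 \<and> \<not> loop_test m beta f x ft z j" using trm unfolding prox_terminates_def by blast
  have T: "T \<ge> 1 \<and> \<not> loop_test m beta f x ft z T"
    unfolding T_def num_trials_def by (rule LeastI_ex[OF ex])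
  thus "T \<ge> 1" "\<not> loop_test m beta f x ft z T" by auto
  show "cont T" unfolding cont_def
  proof
    fix i assume i: "i \<in> {1..<T}"
    show "loop_test m beta f x ft z i"
    proof (rule ccontr)
      assume "\<not> loop_test m beta f x ft z i"
      hence "T \<le> i" unfolding T_def num_trials_def using i by (intro Least_le) auto
      with i show False by auto
    qed
  qed
qed

lemma outer_step:
  assumes trm: "prox_terminates m beta f x ft z"
  defines "T \<equiv> num_trials m beta f x ft z"
  assumes ns: "\<not> inexact_stationary m f eta eps (z (Suc T))"
  shows "1 \<le> (f x - f (z (Suc T))) * (2 * (m + rho) ^ 2 / ((m + beta * rho) * eta ^ 2) + (1 - beta) / (beta * eps))"
proof -
  have T1: "T \<ge> 1" and nLT: "\<not> loop_test m beta f x ft z T" and cT: "cont T"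
    using T_props[OF trm] unfolding T_def by auto
  define zT where "zT = z (Suc T)"
  define r where "r = norm (zT - x) ^ 2"
  define dl where "dl = f x - ft T zT"
  define Fz where "Fz = f zT + m / 2 * r"
  define e where "e = Fz - ft T zT"
  define v where "v = (m + rho) *\<^sub>R (x - zT)"
  define D where "D = f x - f zT"
  have r0: "r \<ge> 0" unfolding r_def by simp
  have mr: "m / 2 * r \<ge> 0" using m0 r0 by simp
  have ex: "f x - Fz \<ge> beta * dl" using nLT unfolding loop_test_def Fz_def r_def dl_def zT_def by simp
  have dr: "dl \<ge> rho * r" using basic_b(1)[OF T1 cT] unfolding dl_def r_def zT_def .
  have "beta * dl \<ge> beta * (rho * r)" using dr b0 by (intro mult_left_mono) auto
  hence D1: "D \<ge> beta * (rho * r) + m / 2 * r" using ex unfolding D_def Fz_def by linarith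
  have bro: "beta * (rho * r) \<ge> 0" using b0 rho0 r0 by simp
  have D0: "D \<ge> 0" using D1 bro mr by linarith
  have bdl: "beta * dl = beta * (f x - Fz) + beta * e" unfolding dl_def e_def by (simp add: algebra_simps)
  have be: "beta * e \<le> (1 - beta) * D"
  proof -
    have "beta * e \<le> (1 - beta) * (f x - Fz)" using ex bdl by (simp add: algebra_simps)
    also have "\<dots> \<le> (1 - beta) * D" using b1 mr unfolding D_def Fz_def by (intro mult_left_mono) auto
    finally show ?thesis .
  qed
  have vsub: "v \<in> esubdiff m e f zT"
    unfolding esubdiff_def
  proof safe
    fix u
    define P where "P = inner (x - zT) (u - zT)"
    have a: "ft T u \<ge> ft T zT + inner (rho *\<^sub>R (x - zT)) (u - zT)" using basic_a[OF T1 cT] unfolding zT_def .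
    have b: "ft T u \<le> f u + m / 2 * norm (u - x) ^ 2" using model[OF T1 cT] unfolding Fm_def by blast
    have nu: "norm (u - x) ^ 2 = norm (u - zT) ^ 2 + 2 * inner (u - zT) (zT - x) + r"
      unfolding r_def by (metis diff_add_cancel add_diff_eq norm_sq_add)
    have i1: "inner (u - zT) (zT - x) = - P" unfolding P_def
      by (simp add: inner_commute inner_diff_left inner_diff_right algebra_simps)
    have i2: "inner (rho *\<^sub>R (x - zT)) (u - zT) = rho * P" unfolding P_def by simp
    have i3: "inner v (u - zT) = (m + rho) * P" unfolding P_def v_def by simp
    have "m / 2 * norm (u - x) ^ 2 = m / 2 * norm (u - zT) ^ 2 - m * P + m / 2 * r"
      unfolding nu i1 by (simp add: algebra_simps)
    thus "f u \<ge> f zT + inner v (u - zT) - m / 2 * norm (u - zT) ^ 2 - e"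
      using a b i2 i3 unfolding e_def Fz_def by (simp add: algebra_simps)
  qed
  have nv: "norm v = (m + rho) * norm (x - zT)" unfolding v_def using m0 rho0 by simp
  have "\<not> (e \<le> eps \<and> norm v \<le> eta)"
    using ns stat_lemma[OF vsub] unfolding zT_def T_def by blast
  define A where "A = 2 * (m + rho) ^ 2 / ((m + beta * rho) * eta ^ 2)"
  define B where "B = (1 - beta) / (beta * eps)"
  have A0: "A \<ge> 0" unfolding A_def using m0 b0 rho0 by simp
  have B0: "B \<ge> 0" unfolding B_def using b0 b1 eps0 by simp
  have mb: "m + beta * rho > 0" using m0 b0 rho0 by (simp add: add_nonneg_pos)
  have "1 \<le> D * A + D * B"
  proof (cases "e > eps")
    case True
    have "beta * eps < beta * e" using True b0 by simp
    hence "beta * eps < (1 - beta) * D" using be by linarith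
    hence "1 < D * B" unfolding B_def using b0 b1 eps0 by (simp add: field_simps)
    moreover have "D * A \<ge> 0" using D0 A0 by simp
    ultimately show ?thesis by linarith
  next
    case False
    hence "norm v > eta" using \<open>\<not> (e \<le> eps \<and> norm v \<le> eta)\<close> by auto
    hence "eta ^ 2 < norm v ^ 2" using eta0 by (intro power_strict_mono) auto
    also have "norm v ^ 2 = (m + rho) ^ 2 * r" unfolding nv r_def by (simp add: power_mult_distrib norm_minus_commute)
    finally have er: "eta ^ 2 < (m + rho) ^ 2 * r" .
    have "D \<ge> (m + beta * rho) / 2 * r"
    proof -
      have "beta * (rho * r) \<ge> beta * rho / 2 * r" using bro by (simp add: algebra_simps)
      moreover have "(m + beta * rho) / 2 * r = m / 2 * r + beta * rho / 2 * r" by (simp add: algebra_simps)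
      ultimately show ?thesis using D1 by linarith
    qed
    hence DA: "D * A \<ge> (m + beta * rho) / 2 * r * A" using A0 by (intro mult_right_mono) auto
    have EQ: "(m + beta * rho) / 2 * r * A = (m + rho) ^ 2 * r / eta ^ 2"
    proof -
      have gen: "K / 2 * r * (2 * (m + rho) ^ 2 / (K * eta ^ 2)) = (m + rho) ^ 2 * r / eta ^ 2" if "K > 0" for K
        using that eta0 by (simp add: field_simps)
      show ?thesis unfolding A_def by (rule gen[OF mb])
    qed
    have GT: "(m + rho) ^ 2 * r / eta ^ 2 > 1" using er eta0 by simp
    have "D * A > 1" using DA EQ GT by linarith
    moreover have "D * B \<ge> 0" using D0 B0 by simp
    ultimately show ?thesis by linarith
  qed
  thus ?thesis unfolding A_def B_def D_def zT_def by (simp add: algebra_simps)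
qed

end

lemma tele: "1 \<le> n \<Longrightarrow> (\<Sum>i\<in>{1..<n}. (F i - F (Suc i))) = F 1 - (F n :: real)"
  by (induction n rule: nat_induct_at_least) auto

theorem mainTheorem10:
  fixes f :: "'a::euclidean_space \<Rightarrow> real"
    and m L beta rho eta eps :: real
    and x :: "nat \<Rightarrow> 'a"
    and g :: "nat \<Rightarrow> nat \<Rightarrow> 'a"
    and ft :: "nat \<Rightarrow> nat \<Rightarrow> 'a \<Rightarrow> real"
    and z :: "nat \<Rightarrow> nat \<Rightarrow> 'a"
  assumes "m \<ge> 0"
    and "weakly_convex m f"
    and "lipschitz_on L UNIV f"
    and "bdd_below (range f)"
    and "0 < beta" and "beta < 1" and "rho > 0"
    and "eta > 0" and "eps > 0"
    and runs: "\<forall>k\<ge>1. prox_descent_run m beta rho f (x k) (g k) (ft k) (z k)"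
    and next_iter: "\<forall>k\<ge>1. prox_terminates m beta f (x k) (ft k) (z k) \<longrightarrow>
             x (Suc k) = z k (Suc (num_trials m beta f (x k) (ft k) (z k)))"
  shows "\<exists>kstar\<ge>1.
           inexact_stationary m f eta eps (x kstar) \<and>
           (\<forall>k\<in>{1..<kstar}. \<not> inexact_stationary m f eta eps (x k)) \<and>
           (\<forall>i\<in>{1..<kstar}. prox_terminates m beta f (x i) (ft i) (z i)) \<and>
           int kstar \<le> Kmax m beta rho (f (x 1) - (INF y. f y)) eta eps + 1 \<and>
           real (\<Sum>i\<in>{1..<kstar}. num_trials m beta f (x i) (ft i) (z i))
             \<le> 8 * real_of_int (Kmax m beta rho (f (x 1) - (INF y. f y)) eta eps)
                 / ((1 - beta) ^ 2 * rho) * (1 + m / rho) ^ 2 * L ^ 2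
                 * max (2 * rho / eta ^ 2) (1 / eps)"
proof -
  note asm = assms
  have ctx: "pdctx m beta rho L eta eps f (x k) (g k) (ft k) (z k)" if "k \<ge> 1" for k
    using assms that unfolding pdctx_def by blast
  define St where "St k \<longleftrightarrow> inexact_stationary m f eta eps (x k)" for k
  define gap where "gap = f (x 1) - (INF y. f y)"
  have INFle: "(INF y. f y) \<le> f y" for y by (rule cINF_lower[OF assms(4)]) simp
  have gap0: "gap \<ge> 0" unfolding gap_def using INFle[of "x 1"] by simp
  define Ap where "Ap = 2 * (m + rho) ^ 2 / ((m + beta * rho) * eta ^ 2) + (1 - beta) / (beta * eps)"
  define Bnd where "Bnd = 8 / ((1 - beta) ^ 2 * rho) * (1 + m / rho) ^ 2 * L ^ 2 * max (2 * rho / eta ^ 2) (1 / eps)"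
  have mb: "m + beta * rho > 0" using assms by (simp add: add_nonneg_pos)
  have Ap0: "Ap \<ge> 0" unfolding Ap_def using assms mb by simp
  have KA: "Kmax m beta rho gap eta eps = \<lceil>gap * Ap + 1\<rceil>"
  proof -
    have "2 * (m + rho) ^ 2 * gap / (m + beta * rho) * (1 / eta ^ 2) + (1 - beta) * gap / beta * (1 / eps)
          = gap * Ap" unfolding Ap_def using assms(5,9) by (simp add: field_simps)
    thus ?thesis unfolding Kmax_def by simp
  qed
  have mx: "max (2 * rho / eta ^ 2) (1 / eps) \<ge> 0"
    by (rule order_trans[OF _ max.cobounded2]) (use assms(9) in simp)
  have Bnd0: "Bnd \<ge> 0" unfolding Bnd_def using mx assms(7)
    by (intro mult_nonneg_nonneg divide_nonneg_nonneg) auto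
  have inner: "prox_terminates m beta f (x k) (ft k) (z k) \<and>
      real (num_trials m beta f (x k) (ft k) (z k)) \<le> Bnd" if "k \<ge> 1" "\<not> St k" for k
    using pdctx.inner_term[OF ctx[OF that(1)]] that(2) unfolding St_def Bnd_def by blast
  have CL: "real (n - 1) \<le> gap * Ap" if n: "n \<ge> 1" and ns: "\<forall>k\<in>{1..n}. \<not> St k" for n
  proof -
    have step: "1 \<le> (f (x k) - f (x (Suc k))) * Ap" if k: "k \<in> {1..<n}" for k
    proof -
      have k1: "k \<ge> 1" using k by simp
      have trm: "prox_terminates m beta f (x k) (ft k) (z k)" using inner[OF k1] ns k by auto
      have nx: "x (Suc k) = z k (Suc (num_trials m beta f (x k) (ft k) (z k)))"
        using next_iter k1 trm by blast
      have "\<not> St (Suc k)" using ns k by auto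
      hence "\<not> inexact_stationary m f eta eps (z k (Suc (num_trials m beta f (x k) (ft k) (z k))))"
        unfolding St_def nx .
      from pdctx.outer_step[OF ctx[OF k1] trm this] show ?thesis unfolding Ap_def nx by simp
    qed
    have "real (n - 1) = (\<Sum>k\<in>{1..<n}. (1::real))" by simp
    also have "\<dots> \<le> (\<Sum>k\<in>{1..<n}. (f (x k) - f (x (Suc k))) * Ap)" by (rule sum_mono) (rule step)
    also have "\<dots> = (\<Sum>k\<in>{1..<n}. (f (x k) - f (x (Suc k)))) * Ap" by (simp add: sum_distrib_right)
    also have "\<dots> = (f (x 1) - f (x n)) * Ap" using tele[OF n, of "\<lambda>i. f (x i)"] by simp
    also have "\<dots> \<le> gap * Ap" unfolding gap_def using INFle[of "x n"] Ap0 by (intro mult_right_mono) auto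
    finally show ?thesis .
  qed
  have exS: "\<exists>k. k \<ge> 1 \<and> St k"
  proof (rule ccontr)
    assume "\<not> ?thesis"
    hence ns: "\<forall>k\<in>{1..n}. \<not> St k" for n by auto
    define n where "n = nat \<lceil>gap * Ap + 1\<rceil> + 1"
    have "n \<ge> 1" unfolding n_def by simp
    hence "real (n - 1) \<le> gap * Ap" using CL ns by blast
    moreover have "real (n - 1) \<ge> gap * Ap + 1" unfolding n_def by linarith
    ultimately show False by linarith
  qed
  define ks where "ks = (LEAST k. k \<ge> 1 \<and> St k)"
  have ks: "ks \<ge> 1 \<and> St ks" unfolding ks_def by (rule LeastI_ex[OF exS])
  have before: "\<not> St k" if "k \<in> {1..<ks}" for k
  proof
    assume "St k"
    hence "ks \<le> k" unfolding ks_def using that by (intro Least_le) auto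
    with that show False by auto
  qed
  have kb: "real (ks - 1) \<le> gap * Ap + 1"
  proof (cases "ks = 1")
    case True thus ?thesis using gap0 Ap0 by simp
  next
    case False
    hence "ks - 1 \<ge> 1" using ks by linarith
    moreover have "\<forall>k\<in>{1..ks - 1}. \<not> St k" using before ks by auto
    ultimately have "real (ks - 1 - 1) \<le> gap * Ap" by (rule CL)
    thus ?thesis using False ks by (simp add: of_nat_diff)
  qed
  have kbi: "int ks - 1 \<le> \<lceil>gap * Ap + 1\<rceil>"
  proof -
    have "real (ks - 1) \<le> of_int \<lceil>gap * Ap + 1\<rceil>" using kb le_of_int_ceiling order_trans by blast
    hence "int (ks - 1) \<le> \<lceil>gap * Ap + 1\<rceil>" by (metis of_int_le_iff of_int_of_nat_eq)
    thus ?thesis using ks by (simp add: of_nat_diff)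
  qed
  have sumb: "real (\<Sum>i\<in>{1..<ks}. num_trials m beta f (x i) (ft i) (z i)) \<le> real (ks - 1) * Bnd"
  proof -
    have "real (\<Sum>i\<in>{1..<ks}. num_trials m beta f (x i) (ft i) (z i))
          = (\<Sum>i\<in>{1..<ks}. real (num_trials m beta f (x i) (ft i) (z i)))" by simp
    also have "\<dots> \<le> (\<Sum>i\<in>{1..<ks}. Bnd)"
      by (rule sum_mono) (use inner before in auto)
    also have "\<dots> = real (ks - 1) * Bnd" by simp
    finally show ?thesis .
  qed
  have "real (ks - 1) * Bnd \<le> real_of_int \<lceil>gap * Ap + 1\<rceil> * Bnd"
  proof -
    have "real (ks - 1) \<le> real_of_int \<lceil>gap * Ap + 1\<rceil>" using kbi ks by (simp add: of_nat_diff)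
    thus ?thesis using Bnd0 by (rule mult_right_mono)
  qed
  moreover have "real_of_int \<lceil>gap * Ap + 1\<rceil> * Bnd =
      8 * real_of_int (Kmax m beta rho gap eta eps)
                 / ((1 - beta) ^ 2 * rho) * (1 + m / rho) ^ 2 * L ^ 2
                 * max (2 * rho / eta ^ 2) (1 / eps)"
    unfolding KA Bnd_def by (simp add: algebra_simps)
  ultimately have fin: "real (\<Sum>i\<in>{1..<ks}. num_trials m beta f (x i) (ft i) (z i)) \<le>
      8 * real_of_int (Kmax m beta rho gap eta eps)
                 / ((1 - beta) ^ 2 * rho) * (1 + m / rho) ^ 2 * L ^ 2
                 * max (2 * rho / eta ^ 2) (1 / eps)" using sumb by linarith
  show ?thesis
  proof (intro exI[of _ ks] conjI)
    show "ks \<ge> 1" using ks by simp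
    show "inexact_stationary m f eta eps (x ks)" using ks unfolding St_def by simp
    show "\<forall>k\<in>{1..<ks}. \<not> inexact_stationary m f eta eps (x k)" using before unfolding St_def by blast
    show "\<forall>i\<in>{1..<ks}. prox_terminates m beta f (x i) (ft i) (z i)" using inner before by auto
    show "int ks \<le> Kmax m beta rho (f (x 1) - (INF y. f y)) eta eps + 1"
      using kbi unfolding gap_def[symmetric] KA by simp
    show "real (\<Sum>i\<in>{1..<ks}. num_trials m beta f (x i) (ft i) (z i))
             \<le> 8 * real_of_int (Kmax m beta rho (f (x 1) - (INF y. f y)) eta eps)
                 / ((1 - beta) ^ 2 * rho) * (1 + m / rho) ^ 2 * L ^ 2
                 * max (2 * rho / eta ^ 2) (1 / eps)"
      using fin unfolding gap_def .
  qed
qed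

end
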